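(* For all positive integers $t,s$, the complete bipartite graph $K_{4t,4s}$ has an almost 2-perfect 8-cycle decomposition.
   Context: An 8-cycle decomposition of a graph $G$ is a collection of pairwise edge-disjoint 8-cycles in $G$ whose edge sets partition $E(G)$. For an 8-cycle $C$, an inside 8-cycle of $C$ is an 8-cycle on the same vertex set as $C$ sharing no edge with $C$. An 8-cycle decomposition $\mathcal{C}$ of $G$ is almost 2-perfect (A2P) if one can choose, for each $C\in\mathcal{C}$, an inside 8-cycle $C'$ of $C$ with all edges in $G$, such that the chosen cycles $\{C'\}$ again form an 8-cycle decomposition of $G$. *)

theory Defs
  imports Main
begin

text \<open>A (simple) graph is given by its edge set: a set of 2-element vertex sets.\<close>

definition cycle_edges :: "'a list \<Rightarrow> 'a set set" where
  "cycle_edges vs = {{vs ! i, vs ! ((i + 1) mod length vs)} | i. i < length vs}"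

definition is_8cycle :: "'a set set \<Rightarrow> bool" where
  "is_8cycle C \<longleftrightarrow> (\<exists>vs. length vs = 8 \<and> distinct vs \<and> C = cycle_edges vs)"

definition cycle_vertices :: "'a set set \<Rightarrow> 'a set" where
  "cycle_vertices C = \<Union>C"

definition inside_8cycle :: "'a set set \<Rightarrow> 'a set set \<Rightarrow> bool" where
  "inside_8cycle C C' \<longleftrightarrow> is_8cycle C' \<and> cycle_vertices C' = cycle_vertices C \<and> C' \<inter> C = {}"

definition eight_cycle_decomposition :: "'a set set \<Rightarrow> 'a set set set \<Rightarrow> bool" where
  "eight_cycle_decomposition E \<C> \<longleftrightarrow>
     (\<forall>C\<in>\<C>. is_8cycle C) \<and>
     (\<forall>C\<in>\<C>. \<forall>D\<in>\<C>. C \<noteq> D \<longrightarrow> C \<inter> D = {}) \<and>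
     \<Union>\<C> = E"

definition almost_2_perfect :: "'a set set \<Rightarrow> 'a set set set \<Rightarrow> bool" where
  "almost_2_perfect E \<C> \<longleftrightarrow> eight_cycle_decomposition E \<C> \<and>
     (\<exists>f. (\<forall>C\<in>\<C>. inside_8cycle C (f C) \<and> f C \<subseteq> E) \<and>
          (\<forall>C\<in>\<C>. \<forall>D\<in>\<C>. C \<noteq> D \<longrightarrow> f C \<inter> f D = {}) \<and>
          eight_cycle_decomposition E (f ` \<C>))"

definition K_bip :: "nat \<Rightarrow> nat \<Rightarrow> (nat + nat) set set" where
  "K_bip m n = {{Inl i, Inr j} | i j. i < m \<and> j < n}"

end

theory Submission
  imports Defs
begin
definition P1 :: "nat \<Rightarrow> nat \<Rightarrow> bool" where
  "P1 a b \<longleftrightarrow> (b mod 4 = a mod 4 \<or> (b + 1) mod 4 = a mod 4)"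

definition E1 :: "nat \<Rightarrow> nat \<Rightarrow> (nat + nat) set set" where
  "E1 p q = {{Inl a, Inr b} | a b. a div 4 = p \<and> b div 4 = q \<and> P1 a b}"

definition E2 :: "nat \<Rightarrow> nat \<Rightarrow> (nat + nat) set set" where
  "E2 p q = {{Inl a, Inr b} | a b. a div 4 = p \<and> b div 4 = q \<and> \<not> P1 a b}"

lemma dbl_eq[simp]: "({Inl a, Inr b} = ({Inl a', Inr b'} :: (nat+nat) set)) \<longleftrightarrow> a = a' \<and> b = b'"
  "({Inl a, Inr b} = ({Inr b', Inl a'} :: (nat+nat) set)) \<longleftrightarrow> a = a' \<and> b = b'"
  by (auto simp: doubleton_eq_iff)

lemma decomp4: "(a::nat) div 4 = p \<Longrightarrow> \<exists>r<4. a = 4*p + r"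
  by (rule exI[of _ "a mod 4"]) auto

lemma P1_shift: "r < 4 \<Longrightarrow> u < 4 \<Longrightarrow> P1 (4*p+r) (4*q+u) \<longleftrightarrow> (u = r \<or> (u+1) mod 4 = r)"
proof -
  assume "r < 4" "u < 4"
  have "(4*p+r) mod 4 = r" "(4*q+u) mod 4 = u" "(4*q+u+1) mod 4 = (u+1) mod 4"
    using \<open>r<4\<close> \<open>u<4\<close> by (simp_all add: mod_add_left_eq[symmetric] add.assoc)
  then show ?thesis unfolding P1_def by simp
qed

lemma cases4: "(r::nat) < 4 \<Longrightarrow> r = 0 \<or> r = 1 \<or> r = 2 \<or> r = 3" by auto

lemma memE1: "a div 4 = p \<Longrightarrow> b div 4 = q \<Longrightarrow> P1 a b \<Longrightarrow> {Inl a, Inr b} \<in> E1 p q"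
  "a div 4 = p \<Longrightarrow> b div 4 = q \<Longrightarrow> P1 a b \<Longrightarrow> {Inr b, Inl a} \<in> E1 p q"
  unfolding E1_def by (auto simp: insert_commute)

lemma E1_expl: "E1 p q = {{Inl(4*p), Inr(4*q)}, {Inr(4*q), Inl(4*p+1)}, {Inl(4*p+1), Inr(4*q+1)},
     {Inr(4*q+1), Inl(4*p+2)}, {Inl(4*p+2), Inr(4*q+2)}, {Inr(4*q+2), Inl(4*p+3)},
     {Inl(4*p+3), Inr(4*q+3)}, {Inr(4*q+3), Inl(4*p)}}" (is "_ = ?R")
  proof
    show "E1 p q \<subseteq> ?R"
    proof
      fix e assume "e \<in> E1 p q"
      then obtain a b where e: "e = {Inl a, Inr b}" "a div 4 = p" "b div 4 = q" "P1 a b"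
        unfolding E1_def by blast
      obtain r where r: "r < 4" "a = 4*p+r" using decomp4[OF e(2)] by blast
      obtain u where u: "u < 4" "b = 4*q+u" using decomp4[OF e(3)] by blast
      have P: "u = r \<or> (u+1) mod 4 = r" using e(4) P1_shift[OF r(1) u(1)] r u by simp
      show "e \<in> ?R" unfolding e(1) r(2) u(2)
        using cases4[OF r(1)] cases4[OF u(1)] P
        by (elim disjE) simp_all
    qed
  next
    have m: "{Inl(4*p+r), Inr(4*q+u)} \<in> E1 p q" "{Inr(4*q+u), Inl(4*p+r)} \<in> E1 p q"
      if "r < 4" "u < 4" "u = r \<or> (u+1) mod 4 = r" for r u
      using memE1[OF _ _ iffD2[OF P1_shift]] that by auto
    show "?R \<subseteq> E1 p q" 
      using m(1)[of 0 0] m(2)[of 1 0] m(1)[of 1 1] m(2)[of 2 1] m(1)[of 2 2] m(2)[of 3 2]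
        m(1)[of 3 3] m(2)[of 0 3] by simp
  qed

lemma memE2: "a div 4 = p \<Longrightarrow> b div 4 = q \<Longrightarrow> \<not> P1 a b \<Longrightarrow> {Inl a, Inr b} \<in> E2 p q"
  "a div 4 = p \<Longrightarrow> b div 4 = q \<Longrightarrow> \<not> P1 a b \<Longrightarrow> {Inr b, Inl a} \<in> E2 p q"
  unfolding E2_def by (auto simp: insert_commute)

lemma E2_expl: "E2 p q = {{Inl(4*p), Inr(4*q+1)}, {Inr(4*q+1), Inl(4*p+3)}, {Inl(4*p+3), Inr(4*q)},
     {Inr(4*q), Inl(4*p+2)}, {Inl(4*p+2), Inr(4*q+3)}, {Inr(4*q+3), Inl(4*p+1)},
     {Inl(4*p+1), Inr(4*q+2)}, {Inr(4*q+2), Inl(4*p)}}" (is "_ = ?R")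
  proof
    show "E2 p q \<subseteq> ?R"
    proof
      fix e assume "e \<in> E2 p q"
      then obtain a b where e: "e = {Inl a, Inr b}" "a div 4 = p" "b div 4 = q" "\<not> P1 a b"
        unfolding E2_def by blast
      obtain r where r: "r < 4" "a = 4*p+r" using decomp4[OF e(2)] by blast
      obtain u where u: "u < 4" "b = 4*q+u" using decomp4[OF e(3)] by blast
      have P: "\<not>(u = r \<or> (u+1) mod 4 = r)" using e(4) P1_shift[OF r(1) u(1)] r u by simp
      show "e \<in> ?R" unfolding e(1) r(2) u(2)
        using cases4[OF r(1)] cases4[OF u(1)] P
        by (elim disjE) simp_all
    qed
  next
    have m: "{Inl(4*p+r), Inr(4*q+u)} \<in> E2 p q" "{Inr(4*q+u), Inl(4*p+r)} \<in> E2 p q"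
      if "r < 4" "u < 4" "\<not>(u = r \<or> (u+1) mod 4 = r)" for r u
      using memE2[of "4*p+r" p "4*q+u" q] P1_shift[OF that(1,2), of p q] that by auto
    show "?R \<subseteq> E2 p q" 
      using m(1)[of 0 1] m(2)[of 3 1] m(1)[of 3 0] m(2)[of 2 0] m(1)[of 2 3] m(2)[of 1 3]
        m(1)[of 1 2] m(2)[of 0 2] by simp
  qed


lemma cyc8: "cycle_edges [x0,x1,x2,x3,x4,x5,x6,x7] =
  {{x0,x1},{x1,x2},{x2,x3},{x3,x4},{x4,x5},{x5,x6},{x6,x7},{x7,x0}}"
proof -
  define L where "L = [x0,x1,x2,x3,x4,x5,x6,x7]"
  have l: "length L = 8" by (simp add: L_def)
  have e: "cycle_edges L = (\<lambda>i. {L ! i, L ! ((i + 1) mod 8)}) ` {..<8}"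
    unfolding cycle_edges_def l by auto
  have "{..<8::nat} = {0,1,2,3,4,5,6,7}" by auto
  then show ?thesis unfolding e L_def[symmetric] by (simp add: L_def)
qed

lemma cyc_vert: "length vs \<ge> 2 \<Longrightarrow> \<Union>(cycle_edges vs) = set vs"
proof
  assume "length vs \<ge> 2"
  show "\<Union>(cycle_edges vs) \<subseteq> set vs" unfolding cycle_edges_def
    using \<open>length vs \<ge> 2\<close> by (auto intro!: nth_mem mod_less_divisor)
  show "set vs \<subseteq> \<Union>(cycle_edges vs)"
  proof
    fix x assume "x \<in> set vs"
    then obtain i where i: "i < length vs" "x = vs ! i" by (auto simp: in_set_conv_nth)
    then have "{vs ! i, vs ! ((i + 1) mod length vs)} \<in> cycle_edges vs" unfolding cycle_edges_def by blast
    then show "x \<in> \<Union>(cycle_edges vs)" using i by blast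
  qed
qed

definition L1 :: "nat \<Rightarrow> nat \<Rightarrow> (nat + nat) list" where
  "L1 p q = [Inl(4*p), Inr(4*q), Inl(4*p+1), Inr(4*q+1), Inl(4*p+2), Inr(4*q+2), Inl(4*p+3), Inr(4*q+3)]"
definition L2 :: "nat \<Rightarrow> nat \<Rightarrow> (nat + nat) list" where
  "L2 p q = [Inl(4*p), Inr(4*q+1), Inl(4*p+3), Inr(4*q), Inl(4*p+2), Inr(4*q+3), Inl(4*p+1), Inr(4*q+2)]"

lemma E1_L: "E1 p q = cycle_edges (L1 p q)"
  unfolding L1_def cyc8 by (rule E1_expl)
lemma E2_L: "E2 p q = cycle_edges (L2 p q)"
  unfolding L2_def cyc8 by (rule E2_expl)

lemma E1_cyc: "is_8cycle (E1 p q)"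
  unfolding is_8cycle_def E1_L by (rule exI[of _ "L1 p q"]) (simp add: L1_def)
lemma E2_cyc: "is_8cycle (E2 p q)"
  unfolding is_8cycle_def E2_L by (rule exI[of _ "L2 p q"]) (simp add: L2_def)

lemma vert_eq: "cycle_vertices (E1 p q) = cycle_vertices (E2 p q)"
proof -
  have "set (L1 p q) = set (L2 p q)" unfolding L1_def L2_def by auto
  then show ?thesis unfolding cycle_vertices_def E1_L E2_L
    by (simp add: cyc_vert L1_def L2_def)
qed

lemma disj12: "E1 p q \<inter> E2 p' q' = {}"
  unfolding E1_def E2_def by auto
lemma disj11: "(p,q) \<noteq> (p',q') \<Longrightarrow> E1 p q \<inter> E1 p' q' = {}"
  unfolding E1_def by auto
lemma disj22: "(p,q) \<noteq> (p',q') \<Longrightarrow> E2 p q \<inter> E2 p' q' = {}"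
  unfolding E2_def by auto

lemma in1: "{Inl (4*p), Inr (4*q)} \<in> E1 p q"
  by (rule memE1) (auto simp: P1_def)
lemma in2: "{Inl (4*p), Inr (4*q+1)} \<in> E2 p q"
  using memE2(1)[of "4*p+0" p "4*q+1" q] P1_shift[of 0 1 p q] by simp

definition BB :: "nat \<Rightarrow> nat \<Rightarrow> (nat + nat) set set" where
  "BB p q = {{Inl a, Inr b} | a b. a div 4 = p \<and> b div 4 = q}"

definition blk :: "(nat + nat) set set \<Rightarrow> (nat + nat) set set" where
  "blk C = {{Inl a, Inr b} | a b. \<exists>a' b'. {Inl a', Inr b'} \<in> C \<and> a div 4 = a' div 4 \<and> b div 4 = b' div 4}"

definition ff :: "(nat + nat) set set \<Rightarrow> (nat + nat) set set" where
  "ff C = blk C - C"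

lemma blk1: "blk (E1 p q) = BB p q"
proof
  show "blk (E1 p q) \<subseteq> BB p q" unfolding blk_def BB_def E1_def by auto
  show "BB p q \<subseteq> blk (E1 p q)" unfolding blk_def BB_def using in1[of p q] by fastforce
qed
lemma blk2: "blk (E2 p q) = BB p q"
proof
  show "blk (E2 p q) \<subseteq> BB p q" unfolding blk_def BB_def E2_def by auto
  show "BB p q \<subseteq> blk (E2 p q)" unfolding blk_def BB_def using in2[of p q] by fastforce
qed

lemma BB_split: "BB p q = E1 p q \<union> E2 p q"
  unfolding BB_def E1_def E2_def by auto

lemma ff1: "ff (E1 p q) = E2 p q"
  unfolding ff_def blk1 BB_split using disj12[of p q p q] by blast
lemma ff2: "ff (E2 p q) = E1 p q"
  unfolding ff_def blk2 BB_split using disj12[of p q p q] by blast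

lemma E1_sub: "p < t \<Longrightarrow> q < s \<Longrightarrow> E1 p q \<subseteq> K_bip (4*t) (4*s)"
  unfolding E1_def K_bip_def by auto
lemma E2_sub: "p < t \<Longrightarrow> q < s \<Longrightarrow> E2 p q \<subseteq> K_bip (4*t) (4*s)"
  unfolding E2_def K_bip_def by auto

theorem lemma2p1:
  fixes t s :: nat
  assumes "t > 0" and "s > 0"
  shows "\<exists>\<C>. almost_2_perfect (K_bip (4 * t) (4 * s)) \<C>"
proof -
  define A where "A = {E1 p q | p q. p < t \<and> q < s}"
  define B where "B = {E2 p q | p q. p < t \<and> q < s}"
  define CC where "CC = A \<union> B"
  have cyc: "\<forall>C\<in>CC. is_8cycle C" unfolding CC_def A_def B_def using E1_cyc E2_cyc by auto
  have dis: "C \<inter> D = {}" if "C \<in> CC" "D \<in> CC" "C \<noteq> D" for C D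
  proof -
    note h = that
    obtain p q where C: "C = E1 p q \<or> C = E2 p q" using h(1) unfolding CC_def A_def B_def by blast
    obtain p' q' where D: "D = E1 p' q' \<or> D = E2 p' q'" using h(2) unfolding CC_def A_def B_def by blast
    show ?thesis using C D h(3) disj11[of p q p' q'] disj22[of p q p' q'] disj12[of p q p' q']
      disj12[of p' q' p q] by (auto simp: Int_commute)
  qed
  have un: "\<Union>CC = K_bip (4*t) (4*s)"
  proof
    show "\<Union>CC \<subseteq> K_bip (4*t) (4*s)" unfolding CC_def A_def B_def using E1_sub E2_sub by blast
    show "K_bip (4*t) (4*s) \<subseteq> \<Union>CC"
    proof
      fix e assume "e \<in> K_bip (4*t) (4*s)"
      then obtain a b where e: "e = {Inl a, Inr b}" "a < 4*t" "b < 4*s" unfolding K_bip_def by blast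
      have pt: "a div 4 < t" "b div 4 < s" using e by auto
      show "e \<in> \<Union>CC"
      proof (cases "P1 a b")
        case True
        then have "e \<in> E1 (a div 4) (b div 4)" using e memE1 by auto
        then show ?thesis unfolding CC_def A_def using pt by blast
      next
        case False
        then have "e \<in> E2 (a div 4) (b div 4)" using e memE2 by auto
        then show ?thesis unfolding CC_def B_def using pt by blast
      qed
    qed
  qed
  have dec: "eight_cycle_decomposition (K_bip (4*t) (4*s)) CC"
    unfolding eight_cycle_decomposition_def using cyc dis un by blast
  have ffin: "ff C \<in> CC" and ffff: "ff (ff C) = C" if "C \<in> CC" for C
    using that unfolding CC_def A_def B_def using ff1 ff2 by auto
  have img: "ff ` CC = CC"
  proof
    show "ff ` CC \<subseteq> CC" using ffin by blast
    show "CC \<subseteq> ff ` CC" using ffin ffff by (metis image_eqI subsetI)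
  qed
  have ins: "inside_8cycle C (ff C) \<and> ff C \<subseteq> K_bip (4*t) (4*s)" if "C \<in> CC" for C
  proof -
    have "ff C \<subseteq> K_bip (4*t) (4*s)" using ffin[OF that] un by blast
    moreover have "inside_8cycle C (ff C)"
      using that unfolding CC_def A_def B_def inside_8cycle_def
      using ff1 ff2 E1_cyc E2_cyc vert_eq disj12 Int_commute by fastforce
    ultimately show ?thesis by blast
  qed
  have fdis: "ff C \<inter> ff D = {}" if "C \<in> CC" "D \<in> CC" "C \<noteq> D" for C D
  proof -
    have "ff C \<noteq> ff D" using ffff that by metis
    then show ?thesis using dis ffin that by blast
  qed
  have "almost_2_perfect (K_bip (4 * t) (4 * s)) CC"
    unfolding almost_2_perfect_def
    using dec ins fdis img by (intro conjI exI[of _ ff]) auto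
  then show ?thesis by blast
qed

end
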